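(* For all integers $n\ge0$ and $m>nt$, $\mathcal{L}^{(t)}_T\big(T^{(t)}_m(x)\,T^{(t)}_n(x)\big)=0$; and for all $n\ge1$, $\mathcal{L}^{(t)}_T\big(T^{(t)}_{nt}(x)\,T^{(t)}_n(x)\big)=t+1$.
   Context: Fix an integer $t\ge1$. For $n\ge1$ let $C_n$ be the $n$-cycle with vertices $1,\dots,n$ (indices mod $n$). If $n\ge t+1$, the $t$-paths in $C_n$ are the $n$ sequences $(i,i+1,\dots,i+t)$ mod $n$, $i=1,\dots,n$; if $n\le t$ there are none. Define $T^{(t)}_n(x)=\sum_F(-1)^{|F|}x^{\,n-(t+1)|F|}$ over all families $F$ of $t$-paths in $C_n$ with pairwise disjoint vertex sets, $T^{(t)}_0=1$. Let $\mathcal{L}^{(t)}_T$ be the linear functional on polynomials with $\mathcal{L}^{(t)}_T(x^{(t+1)j})=\binom{(t+1)j}{j}$ for $j\ge0$ and $\mathcal{L}^{(t)}_T(x^m)=0$ if $t+1\nmid m$. *)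

theory Defs
  imports "HOL-Computational_Algebra.Polynomial"
begin

text \<open>Vertices of C_n are 0,...,n-1 (0-based, indices mod n). The t-path starting
  at vertex i is (i, i+1, ..., i+t) mod n; it exists only when n >= t+1.\<close>

definition tpath_verts :: "nat \<Rightarrow> nat \<Rightarrow> nat \<Rightarrow> nat set" where
  "tpath_verts t n i = (\<lambda>k. (i + k) mod n) ` {0..t}"

text \<open>Families of t-paths (identified by their starting vertices) with pairwise
  disjoint vertex sets.\<close>
definition tpath_families :: "nat \<Rightarrow> nat \<Rightarrow> nat set set" where
  "tpath_families t n = {F. F \<subseteq> {..<n} \<and> (F \<noteq> {} \<longrightarrow> t + 1 \<le> n) \<and>
      (\<forall>i\<in>F. \<forall>j\<in>F. i \<noteq> j \<longrightarrow> tpath_verts t n i \<inter> tpath_verts t n j = {})}"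

definition Tpoly :: "nat \<Rightarrow> nat \<Rightarrow> int poly" where
  "Tpoly t n = (\<Sum>F\<in>tpath_families t n. monom ((-1) ^ card F) (n - (t + 1) * card F))"

definition LT :: "nat \<Rightarrow> int poly \<Rightarrow> int" where
  "LT t p = (\<Sum>i\<le>degree p. coeff p i *
      (if (t + 1) dvd i then int (((t + 1) * (i div (t + 1))) choose (i div (t + 1))) else 0))"

end

theory Submission
  imports Defs
begin


definition lfam :: "nat \<Rightarrow> nat \<Rightarrow> nat set set" where
  "lfam t L = {G. G \<subseteq> {..<L} \<and> (\<forall>g\<in>G. g + t < L) \<and> (\<forall>g\<in>G. \<forall>h\<in>G. g < h \<longrightarrow> g + t < h)}"

definition Ppoly :: "nat \<Rightarrow> nat \<Rightarrow> int poly" where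
  "Ppoly t L = (\<Sum>G\<in>lfam t L. monom ((-1) ^ card G) (L - (t + 1) * card G))"

lemma lfam_finite: "finite (lfam t L)"
proof -
  have "lfam t L \<subseteq> Pow {..<L}" unfolding lfam_def by auto
  thus ?thesis by (rule finite_subset) auto
qed

lemma lfam_fin_mem: "G \<in> lfam t L \<Longrightarrow> finite G"
  unfolding lfam_def by (auto intro: finite_subset)

lemma lfam_card: "G \<in> lfam t L \<Longrightarrow> (t + 1) * card G \<le> L"
proof (induction L arbitrary: G rule: less_induct)
  case (less L)
  show ?case
  proof (cases "G = {}")
    case True then show ?thesis by simp
  next
    case False
    have fin: "finite G" using lfam_fin_mem[OF less.prems] .
    define g where "g = Max G"
    have gG: "g \<in> G" using False fin g_def by simp
    have gL: "g + t < L" using less.prems gG unfolding lfam_def by auto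
    have "G - {g} \<in> lfam t g"
      unfolding lfam_def
    proof (intro CollectI conjI ballI impI)
      show "G - {g} \<subseteq> {..<g}" using fin g_def by (auto simp: order.strict_iff_order)
    next
      fix h assume h: "h \<in> G - {g}"
      then have "h < g" using fin g_def by (auto simp: order.strict_iff_order)
      then show "h + t < g" using less.prems h gG unfolding lfam_def by auto
    next
      fix a b assume "a \<in> G - {g}" "b \<in> G - {g}" "a < b"
      then show "a + t < b" using less.prems unfolding lfam_def by auto
    qed
    then have "(t+1) * card (G - {g}) \<le> g" using less.IH gL by auto
    moreover have "card G = Suc (card (G - {g}))" using fin gG
      by (metis card_Suc_Diff1)
    ultimately show ?thesis using gL by simp
  qed
qed

lemma lfam_small: "L \<le> t \<Longrightarrow> lfam t L = {{}}"
  unfolding lfam_def by auto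

lemma lfam_split:
  assumes "t + 1 \<le> L"
  shows "lfam t L = lfam t (L - 1) \<union> insert (L - t - 1) ` lfam t (L - t - 1)"
proof (intro equalityI subsetI)
  fix G assume G: "G \<in> lfam t L"
  show "G \<in> lfam t (L - 1) \<union> insert (L - t - 1) ` lfam t (L - t - 1)"
  proof (cases "L - t - 1 \<in> G")
    case False
    have a: "\<forall>g\<in>G. g + t < L" and b: "\<forall>g\<in>G. \<forall>h\<in>G. g < h \<longrightarrow> g + t < h"
      using G unfolding lfam_def by auto
    have c: "\<forall>g\<in>G. g + t < L - 1"
    proof
      fix g assume "g \<in> G"
      then have "g + t < L" "g \<noteq> L - t - 1" using a False by auto
      then show "g + t < L - 1" by arith
    qed
    have "G \<in> lfam t (L - 1)" unfolding lfam_def using c b by auto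
    then show ?thesis by simp
  next
    case True
    have a: "\<forall>g\<in>G. g + t < L" and b: "\<forall>g\<in>G. \<forall>h\<in>G. g < h \<longrightarrow> g + t < h"
      using G unfolding lfam_def by auto
    have c: "\<forall>g\<in>G - {L - t - 1}. g + t < L - t - 1"
    proof
      fix g assume g: "g \<in> G - {L - t - 1}"
      show "g + t < L - t - 1"
      proof (cases "g < L - t - 1")
        case True then show ?thesis using b g \<open>L - t - 1 \<in> G\<close> by auto
      next
        case False
        then have "L - t - 1 < g" using g by auto
        then have "L - t - 1 + t < g" using b g \<open>L - t - 1 \<in> G\<close> by auto
        moreover have "g + t < L" using a g by auto
        ultimately show ?thesis using assms by arith
      qed
    qed
    have d: "G - {L - t - 1} \<subseteq> {..<L - t - 1}"
    proof
      fix x assume "x \<in> G - {L - t - 1}"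
      then have "x + t < L - t - 1" using c by blast
      then show "x \<in> {..<L - t - 1}" by simp
    qed
    have "G - {L - t - 1} \<in> lfam t (L - t - 1)" unfolding lfam_def using c b d by blast
    moreover have "G = insert (L - t - 1) (G - {L - t - 1})" using True by auto
    ultimately show ?thesis by blast
  qed
next
  fix G assume "G \<in> lfam t (L - 1) \<union> insert (L - t - 1) ` lfam t (L - t - 1)"
  then show "G \<in> lfam t L" using assms unfolding lfam_def by auto
qed

lemma lfam_disj: "lfam t (L - 1) \<inter> insert (L - t - 1) ` lfam t (L - t - 1) = {}"
  unfolding lfam_def by auto

lemma lfam_notin: "G \<in> lfam t (L - t - 1) \<Longrightarrow> L - t - 1 \<notin> G"
  unfolding lfam_def by auto

lemma inj_insert_lfam: "inj_on (insert (L - t - 1)) (lfam t (L - t - 1))"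
proof (rule inj_onI)
  fix G H assume "G \<in> lfam t (L - t - 1)" "H \<in> lfam t (L - t - 1)"
    "insert (L - t - 1) G = insert (L - t - 1) H"
  then show "G = H" using lfam_notin[of G t L] lfam_notin[of H t L]
    by (metis insert_ident)
qed

lemma Ppoly_small: "L \<le> t \<Longrightarrow> Ppoly t L = monom 1 L"
  unfolding Ppoly_def by (simp add: lfam_small)

definition wt :: "nat \<Rightarrow> nat \<Rightarrow> nat set \<Rightarrow> int poly" where
  "wt t L G = monom ((-1::int) ^ card G) (L - (t + 1) * card G)"

lemma sum_lfam_shift:
  assumes "t + 1 \<le> L"
  shows "(\<Sum>G\<in>lfam t (L - 1). wt t L G) = monom 1 1 * Ppoly t (L - 1)"
  unfolding Ppoly_def sum_distrib_left
proof (rule sum.cong[OF refl])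
  fix G assume G: "G \<in> lfam t (L - 1)"
  have "(t + 1) * card G \<le> L - 1" using lfam_card[OF G] .
  then have "L - (t + 1) * card G = 1 + (L - 1 - (t + 1) * card G)" using assms by arith
  then show "wt t L G = monom 1 1 * monom ((-1) ^ card G) (L - 1 - (t + 1) * card G)"
    unfolding wt_def by (simp add: mult_monom)
qed

lemma sum_lfam_ins:
  "(\<Sum>G\<in>insert (L - t - 1) ` lfam t (L - t - 1). wt t L G) = - Ppoly t (L - t - 1)"
  unfolding Ppoly_def sum.reindex[OF inj_insert_lfam] sum_negf[symmetric]
proof (rule sum.cong[OF refl])
  fix G assume G: "G \<in> lfam t (L - t - 1)"
  have fin: "finite G" using lfam_fin_mem[OF G] .
  have c: "card (insert (L - t - 1) G) = Suc (card G)" using fin lfam_notin[OF G] by simp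
  have "(t + 1) * card G \<le> L - t - 1" using lfam_card[OF G] .
  then have e: "L - (t + 1) * Suc (card G) = L - t - 1 - (t + 1) * card G" by simp
  show "(wt t L \<circ> insert (L - t - 1)) G = - monom ((-1) ^ card G) (L - t - 1 - (t + 1) * card G)"
    unfolding comp_def c e wt_def by (simp add: minus_monom)
qed

lemma Ppoly_rec:
  assumes "t + 1 \<le> L"
  shows "Ppoly t L = monom 1 1 * Ppoly t (L - 1) - Ppoly t (L - t - 1)"
proof -
  have "Ppoly t L = sum (wt t L) (lfam t (L - 1)) + sum (wt t L) (insert (L - t - 1) ` lfam t (L - t - 1))"
    unfolding Ppoly_def wt_def[abs_def] using lfam_split[OF assms] lfam_disj
    by (simp add: lfam_finite sum.union_disjoint)
  then show ?thesis using sum_lfam_shift[OF assms] sum_lfam_ins[of t L] by simp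
qed

lemma degree_Ppoly: "degree (Ppoly t L) \<le> L"
  unfolding Ppoly_def
  by (rule degree_sum_le[OF lfam_finite]) (rule order.trans[OF degree_monom_le], simp)


lemma fam_finite: "finite (tpath_families t m)"
proof -
  have "tpath_families t m \<subseteq> Pow {..<m}" unfolding tpath_families_def by auto
  thus ?thesis by (rule finite_subset) auto
qed

lemma fam_mem_finite: "F \<in> tpath_families t m \<Longrightarrow> finite F"
  unfolding tpath_families_def by (auto intro: finite_subset)

lemma tpv_sub: "0 < m \<Longrightarrow> tpath_verts t m i \<subseteq> {..<m}"
  unfolding tpath_verts_def by auto

lemma tpv_interval:
  assumes "s + t < m"
  shows "tpath_verts t m s = {s..s+t}"
proof -
  have "tpath_verts t m s = (\<lambda>k. s + k) ` {0..t}"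
    unfolding tpath_verts_def using assms by (intro image_cong) auto
  also have "\<dots> = {s..s+t}"
  proof (intro equalityI subsetI)
    fix x assume "x \<in> {s..s+t}"
    then have "x = s + (x - s)" "x - s \<in> {0..t}" by auto
    then show "x \<in> (\<lambda>k. s + k) ` {0..t}" by blast
  qed auto
  finally show ?thesis .
qed

lemma tpv_last:
  assumes "s < m" "m \<le> s + t + 1"
  shows "m - 1 \<in> tpath_verts t m s"
proof -
  have "m - 1 - s \<in> {0..t}" using assms by auto
  moreover have "(s + (m - 1 - s)) mod m = m - 1" using assms by simp
  ultimately show ?thesis unfolding tpath_verts_def by (metis image_eqI)
qed

lemma tpv_last_iff:
  assumes "s < m"
  shows "m - 1 \<in> tpath_verts t m s \<longleftrightarrow> m \<le> s + t + 1"
proof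
  assume h: "m - 1 \<in> tpath_verts t m s"
  show "m \<le> s + t + 1"
  proof (rule ccontr)
    assume "\<not> m \<le> s + t + 1"
    then have "tpath_verts t m s = {s..s+t}" by (intro tpv_interval) auto
    with h \<open>\<not> m \<le> s + t + 1\<close> show False by auto
  qed
qed (rule tpv_last[OF assms])

lemma lfam_sub_fam: "G \<in> lfam t m \<Longrightarrow> G \<in> tpath_families t m"
proof -
  assume G: "G \<in> lfam t m"
  have a: "\<forall>g\<in>G. g + t < m" and b: "\<forall>g\<in>G. \<forall>h\<in>G. g < h \<longrightarrow> g + t < h"
    and c: "G \<subseteq> {..<m}" using G unfolding lfam_def by auto
  have d: "G \<noteq> {} \<longrightarrow> t + 1 \<le> m" using a by fastforce
  have e: "tpath_verts t m i \<inter> tpath_verts t m j = {}" if "i \<in> G" "j \<in> G" "i \<noteq> j" for i j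
  proof -
    have "tpath_verts t m i = {i..i+t}" "tpath_verts t m j = {j..j+t}"
      using a that by (simp_all add: tpv_interval)
    moreover have "i + t < j \<or> j + t < i" using b that by (metis linorder_neqE_nat)
    ultimately show ?thesis by auto
  qed
  show ?thesis unfolding tpath_families_def using c d e by blast
qed

definition famr :: "nat \<Rightarrow> nat \<Rightarrow> nat \<Rightarrow> nat set set" where
  "famr t m s = {F \<in> tpath_families t m. s \<in> F}"

lemma famr_last:
  assumes "t + 1 \<le> m"
  shows "famr t m (m - t - 1) = insert (m - t - 1) ` lfam t (m - t - 1)"
proof (intro equalityI subsetI)
  fix F assume F: "F \<in> famr t m (m - t - 1)"
  let ?a = "m - t - 1"
  have Fs: "F \<subseteq> {..<m}" and aF: "?a \<in> F"
    and disj: "\<forall>i\<in>F. \<forall>j\<in>F. i \<noteq> j \<longrightarrow> tpath_verts t m i \<inter> tpath_verts t m j = {}"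
    using F unfolding famr_def tpath_families_def by auto
  have va: "tpath_verts t m ?a = {?a..m-1}" using assms tpv_interval[of ?a t m] by simp
  have small: "f + t < ?a" if f: "f \<in> F - {?a}" for f
  proof -
    have fm: "f < m" using f Fs by auto
    have D: "tpath_verts t m f \<inter> {?a..m-1} = {}" using disj f aF va by auto
    have "\<not> m \<le> f + t + 1"
    proof
      assume "m \<le> f + t + 1"
      then have "m - 1 \<in> tpath_verts t m f" using tpv_last fm by blast
      with D assms show False by auto
    qed
    then have "tpath_verts t m f = {f..f+t}" by (intro tpv_interval) auto
    with D have "{f..f+t} \<inter> {?a..m-1} = {}" by simp
    then show ?thesis using \<open>\<not> m \<le> f + t + 1\<close> by (cases "f + t < ?a") auto
  qed
  have pw: "g + t < h" if "g \<in> F - {?a}" "h \<in> F - {?a}" "g < h" for g h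
  proof -
    have "tpath_verts t m g = {g..g+t}" "tpath_verts t m h = {h..h+t}"
    proof -
      have "g + t < m" "h + t < m" using small[OF that(1)] small[OF that(2)] by auto
      then show "tpath_verts t m g = {g..g+t}" "tpath_verts t m h = {h..h+t}"
        by (simp_all add: tpv_interval)
    qed
    moreover have "tpath_verts t m g \<inter> tpath_verts t m h = {}" using disj that by auto
    ultimately show ?thesis using that by (cases "g + t < h") auto
  qed
  have sub: "F - {?a} \<subseteq> {..<?a}"
  proof
    fix x assume "x \<in> F - {?a}"
    then have "x + t < ?a" by (rule small)
    then show "x \<in> {..<?a}" by simp
  qed
  have "F - {?a} \<in> lfam t ?a" unfolding lfam_def using small pw sub by blast
  moreover have "F = insert ?a (F - {?a})" using aF by auto
  ultimately show "F \<in> insert ?a ` lfam t ?a" by blast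
next
  fix F assume "F \<in> insert (m - t - 1) ` lfam t (m - t - 1)"
  then have "F \<in> lfam t m" using lfam_split[OF assms] by blast
  then show "F \<in> famr t m (m - t - 1)" using lfam_sub_fam \<open>F \<in> insert (m - t - 1) ` lfam t (m - t - 1)\<close>
    unfolding famr_def by auto
qed


lemma rot_comp:
  fixes v r1 r2 m :: nat
  assumes "(r1 + r2) mod m = 0"
  shows "((v + r1) mod m + r2) mod m = v mod m"
proof -
  have "((v + r1) mod m + r2) mod m = (v + (r1 + r2)) mod m" by (simp add: mod_add_left_eq add.assoc)
  also have "\<dots> = (v + (r1 + r2) mod m) mod m" by (simp add: mod_add_right_eq)
  finally show ?thesis using assms by simp
qed

lemma rot_inv_sum: "0 < (m::nat) \<Longrightarrow> (r + (m - r mod m)) mod m = 0"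
proof -
  assume m: "0 < m"
  have "r mod m < m" using m by simp
  moreover have "m * (r div m) + r mod m = r" by (rule mult_div_mod_eq)
  ultimately have "r + (m - r mod m) = m * (r div m) + m" by arith
  then show ?thesis by simp
qed

lemma rot_inv_sum': "0 < (m::nat) \<Longrightarrow> ((m - r mod m) + r) mod m = 0"
  using rot_inv_sum by (simp add: add.commute)

lemma tpv_rot:
  "tpath_verts t m ((s + r) mod m) = (\<lambda>v. (v + r) mod m) ` tpath_verts t m s"
  unfolding tpath_verts_def image_image
proof (rule image_cong[OF refl])
  fix k
  have "((s + r) mod m + k) mod m = (s + r + k) mod m" by (simp add: mod_add_left_eq)
  moreover have "((s + k) mod m + r) mod m = (s + k + r) mod m" by (simp add: mod_add_left_eq)
  ultimately show "((s + r) mod m + k) mod m = ((s + k) mod m + r) mod m" by (simp add: ac_simps)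
qed

lemma rot_inj: "0 < (m::nat) \<Longrightarrow> inj_on (\<lambda>v. (v + r) mod m) {..<m}"
proof (rule inj_onI)
  fix a b assume m: "0 < m" and a: "a \<in> {..<m}" and b: "b \<in> {..<m}" and e: "(a + r) mod m = (b + r) mod m"
  have "((a + r) mod m + (m - r mod m)) mod m = ((b + r) mod m + (m - r mod m)) mod m" using e by simp
  then have "a mod m = b mod m" using rot_comp[OF rot_inv_sum[OF m]] by metis
  then show "a = b" using a b by simp
qed

lemma fam_rot:
  assumes m: "0 < m" and F: "F \<in> tpath_families t m"
  shows "(\<lambda>v. (v + r) mod m) ` F \<in> tpath_families t m"
proof -
  let ?\<rho> = "\<lambda>v. (v + r) mod m"
  have Fs: "F \<subseteq> {..<m}" and ne: "F \<noteq> {} \<longrightarrow> t + 1 \<le> m"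
    and disj: "\<forall>i\<in>F. \<forall>j\<in>F. i \<noteq> j \<longrightarrow> tpath_verts t m i \<inter> tpath_verts t m j = {}"
    using F unfolding tpath_families_def by auto
  have "?\<rho> ` F \<subseteq> {..<m}" using m by auto
  moreover have "?\<rho> ` F \<noteq> {} \<longrightarrow> t + 1 \<le> m" using ne by auto
  moreover have "tpath_verts t m i' \<inter> tpath_verts t m j' = {}"
    if hi: "i' \<in> ?\<rho> ` F" and hj: "j' \<in> ?\<rho> ` F" and hn: "i' \<noteq> j'" for i' j'
  proof -
    obtain i where i: "i \<in> F" "i' = ?\<rho> i" using hi by blast
    obtain j where j: "j \<in> F" "j' = ?\<rho> j" using hj by blast
    have "i \<noteq> j" using hn i j by auto
    then have D: "tpath_verts t m i \<inter> tpath_verts t m j = {}" using disj i j by auto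
    have "tpath_verts t m i' = ?\<rho> ` tpath_verts t m i" using i tpv_rot by simp
    moreover have "tpath_verts t m j' = ?\<rho> ` tpath_verts t m j" using j tpv_rot by simp
    moreover have "?\<rho> ` tpath_verts t m i \<inter> ?\<rho> ` tpath_verts t m j
        = ?\<rho> ` (tpath_verts t m i \<inter> tpath_verts t m j)"
      by (rule inj_on_image_Int[OF rot_inj[OF m] tpv_sub[OF m] tpv_sub[OF m], symmetric])
    ultimately show ?thesis using D by simp
  qed
  ultimately show ?thesis unfolding tpath_families_def by blast
qed

lemma famr_sum_eq:
  assumes m: "0 < m" and s: "s < m" and s': "s' < m"
  shows "(\<Sum>F\<in>famr t m s. wt t m F) = (\<Sum>F\<in>famr t m s'. wt t m F)"
proof -
  define r where "r = s' + m - s"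
  define r' where "r' = m - r mod m"
  let ?\<rho> = "\<lambda>v. (v + r) mod m"
  let ?\<sigma> = "\<lambda>v. (v + r') mod m"
  have c1: "?\<sigma> (?\<rho> v) = v" if "v < m" for v
    using rot_comp[OF rot_inv_sum[OF m], of v r] that unfolding r'_def by simp
  have c2: "?\<rho> (?\<sigma> v) = v" if "v < m" for v
    using rot_comp[OF rot_inv_sum'[OF m], of v r] that unfolding r'_def by simp
  have rs: "?\<rho> s = s'" unfolding r_def using s s' by simp
  have ss: "?\<sigma> s' = s" using c1[OF s] rs by simp
  show ?thesis
  proof (rule sum.reindex_bij_witness[where j = "\<lambda>F. ?\<rho> ` F" and i = "\<lambda>F. ?\<sigma> ` F"])
    fix F assume F: "F \<in> famr t m s'"
    have Fs: "F \<subseteq> {..<m}" using F unfolding famr_def tpath_families_def by auto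
    show "?\<sigma> ` F \<in> famr t m s" using F fam_rot[OF m] ss unfolding famr_def by auto
    have "?\<rho> ` ?\<sigma> ` F = (\<lambda>v. ?\<rho> (?\<sigma> v)) ` F" by (simp add: image_image)
    also have "\<dots> = (\<lambda>v. v) ` F" using Fs c2 by (intro image_cong) auto
    finally show "?\<rho> ` ?\<sigma> ` F = F" by simp
  next
    fix F assume F: "F \<in> famr t m s"
    have Fs: "F \<subseteq> {..<m}" using F unfolding famr_def tpath_families_def by auto
    show "?\<rho> ` F \<in> famr t m s'" using F fam_rot[OF m] rs unfolding famr_def by auto
    have "?\<sigma> ` ?\<rho> ` F = (\<lambda>v. ?\<sigma> (?\<rho> v)) ` F" by (simp add: image_image)
    also have "\<dots> = (\<lambda>v. v) ` F" using Fs c1 by (intro image_cong) auto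
    finally show "?\<sigma> ` ?\<rho> ` F = F" by simp
    have "card (?\<rho> ` F) = card F" using inj_on_subset[OF rot_inj[OF m] Fs] by (rule card_image)
    then show "wt t m (?\<rho> ` F) = wt t m F" unfolding wt_def by simp
  qed
qed


lemma Tpoly_wt: "Tpoly t m = (\<Sum>F\<in>tpath_families t m. wt t m F)"
  unfolding Tpoly_def wt_def by simp

lemma fam_small: "m \<le> t \<Longrightarrow> tpath_families t m = {{}}"
  unfolding tpath_families_def by auto

lemma Tpoly_small: "m \<le> t \<Longrightarrow> Tpoly t m = monom 1 m"
  unfolding Tpoly_def by (simp add: fam_small)

lemma famr_finite: "finite (famr t m s)"
  unfolding famr_def using fam_finite by simp

lemma fam_decomp:
  assumes "t + 1 \<le> m"
  shows "tpath_families t m = lfam t (m - 1) \<union> (\<Union>s\<in>{m-t-1..<m}. famr t m s)"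
proof (intro equalityI subsetI)
  fix F assume F: "F \<in> tpath_families t m"
  have Fs: "F \<subseteq> {..<m}"
    and disj: "\<forall>i\<in>F. \<forall>j\<in>F. i \<noteq> j \<longrightarrow> tpath_verts t m i \<inter> tpath_verts t m j = {}"
    using F unfolding tpath_families_def by auto
  show "F \<in> lfam t (m - 1) \<union> (\<Union>s\<in>{m-t-1..<m}. famr t m s)"
  proof (cases "\<exists>s\<in>F. m - 1 \<in> tpath_verts t m s")
    case True
    then obtain s where s: "s \<in> F" "m - 1 \<in> tpath_verts t m s" by blast
    have "s < m" using s Fs by auto
    then have "m \<le> s + t + 1" using tpv_last_iff s by blast
    then have "s \<in> {m-t-1..<m}" using \<open>s < m\<close> by auto
    moreover have "F \<in> famr t m s" using F s unfolding famr_def by auto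
    ultimately show ?thesis by blast
  next
    case False
    have small: "g + t < m - 1" if g: "g \<in> F" for g
    proof -
      have "g < m" using g Fs by auto
      then have "\<not> m \<le> g + t + 1" using tpv_last_iff False g by blast
      then show ?thesis by arith
    qed
    have pw: "g + t < h" if "g \<in> F" "h \<in> F" "g < h" for g h
    proof -
      have "g + t < m" "h + t < m" using small[OF that(1)] small[OF that(2)] by auto
      then have "tpath_verts t m g = {g..g+t}" "tpath_verts t m h = {h..h+t}"
        by (simp_all add: tpv_interval)
      moreover have "tpath_verts t m g \<inter> tpath_verts t m h = {}" using disj that by auto
      ultimately show ?thesis using that by (cases "g + t < h") auto
    qed
    have sub: "F \<subseteq> {..<m - 1}"
    proof
      fix x assume "x \<in> F"
      then have "x + t < m - 1" by (rule small)
      then show "x \<in> {..<m - 1}" by simp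
    qed
    have "F \<in> lfam t (m - 1)" unfolding lfam_def using small pw sub by blast
    then show ?thesis by blast
  qed
next
  fix F assume "F \<in> lfam t (m - 1) \<union> (\<Union>s\<in>{m-t-1..<m}. famr t m s)"
  then show "F \<in> tpath_families t m"
  proof
    assume "F \<in> lfam t (m - 1)"
    then have "F \<in> lfam t m" using lfam_split[OF assms] by blast
    then show ?thesis by (rule lfam_sub_fam)
  next
    assume "F \<in> (\<Union>s\<in>{m-t-1..<m}. famr t m s)"
    then show ?thesis unfolding famr_def by auto
  qed
qed

lemma Tpoly_decomp:
  assumes tm: "t + 1 \<le> m"
  shows "Tpoly t m = monom 1 1 * Ppoly t (m - 1) - of_nat (t + 1) * Ppoly t (m - t - 1)"
proof -
  let ?S = "{m-t-1..<m}"
  have d1: "lfam t (m - 1) \<inter> (\<Union>s\<in>?S. famr t m s) = {}"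
  proof (rule ccontr)
    assume "lfam t (m - 1) \<inter> (\<Union>s\<in>?S. famr t m s) \<noteq> {}"
    then obtain F s where F: "F \<in> lfam t (m - 1)" "s \<in> ?S" "F \<in> famr t m s" by blast
    then have "s \<in> F" unfolding famr_def by auto
    then have "s + t < m - 1" using F(1) unfolding lfam_def by auto
    then show False using F(2) by auto
  qed
  have d2: "\<forall>i\<in>?S. \<forall>j\<in>?S. i \<noteq> j \<longrightarrow> famr t m i \<inter> famr t m j = {}"
  proof (intro ballI impI)
    fix i j assume i: "i \<in> ?S" and j: "j \<in> ?S" and ij: "i \<noteq> j"
    show "famr t m i \<inter> famr t m j = {}"
    proof (rule ccontr)
      assume "famr t m i \<inter> famr t m j \<noteq> {}"
      then obtain F where F: "F \<in> tpath_families t m" "i \<in> F" "j \<in> F" unfolding famr_def by blast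
      then have D: "tpath_verts t m i \<inter> tpath_verts t m j = {}" using ij
        unfolding tpath_families_def by auto
      have "m - 1 \<in> tpath_verts t m i" using i tm by (intro tpv_last) auto
      moreover have "m - 1 \<in> tpath_verts t m j" using j tm by (intro tpv_last) auto
      ultimately show False using D by blast
    qed
  qed
  have "Tpoly t m = sum (wt t m) (lfam t (m - 1)) + sum (wt t m) (\<Union>s\<in>?S. famr t m s)"
    unfolding Tpoly_wt fam_decomp[OF tm]
    by (rule sum.union_disjoint) (use d1 lfam_finite famr_finite in auto)
  also have "sum (wt t m) (\<Union>s\<in>?S. famr t m s) = (\<Sum>s\<in>?S. sum (wt t m) (famr t m s))"
    by (rule sum.UNION_disjoint) (use d2 famr_finite in auto)
  also have "\<dots> = (\<Sum>s\<in>?S. sum (wt t m) (famr t m (m - t - 1)))"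
  proof (rule sum.cong[OF refl])
    fix s assume "s \<in> ?S"
    then show "sum (wt t m) (famr t m s) = sum (wt t m) (famr t m (m - t - 1))"
      using tm by (intro famr_sum_eq) auto
  qed
  also have "\<dots> = of_nat (t + 1) * (- Ppoly t (m - t - 1))"
  proof -
    have "sum (wt t m) (famr t m (m - t - 1)) = - Ppoly t (m - t - 1)"
      unfolding famr_last[OF tm] by (rule sum_lfam_ins)
    moreover have cS: "card ?S = t + 1" using tm by simp
    ultimately show ?thesis by (simp only: sum_constant cS)
  qed
  also have "sum (wt t m) (lfam t (m - 1)) = monom 1 1 * Ppoly t (m - 1)"
    by (rule sum_lfam_shift[OF tm])
  finally show ?thesis by simp
qed

lemma degree_Tpoly: "degree (Tpoly t m) \<le> m"
  unfolding Tpoly_def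
  by (rule degree_sum_le[OF fam_finite]) (rule order.trans[OF degree_monom_le], simp)

lemma Tpoly_0: "Tpoly t 0 = 1"
  using Tpoly_small[of 0 t] by simp


definition Hh :: "nat \<Rightarrow> nat \<Rightarrow> int poly \<Rightarrow> int poly" where
  "Hh t d p = (\<Sum>i\<le>d. smult (coeff p i) ((monom 1 (t+1) + 1) ^ i * monom 1 (t * (d - i))))"

lemma H_add: "Hh t d (p + r) = Hh t d p + Hh t d r"
  unfolding Hh_def by (simp add: smult_add_left sum.distrib)

lemma smult_sum_right: "smult c (sum f S) = (\<Sum>x\<in>S. smult c (f x))"
  by (induct S rule: infinite_finite_induct) (simp_all add: smult_add_right)

lemma H_smult: "Hh t d (smult c p) = smult c (Hh t d p)"
  unfolding Hh_def by (simp add: smult_sum_right smult_smult)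

lemma H_diff: "Hh t d (p - r) = Hh t d p - Hh t d r"
  unfolding Hh_def by (simp add: smult_diff_left sum_subtractf)

lemma H_zero: "Hh t d 0 = 0"
  unfolding Hh_def by simp

lemma H_pCons:
  "Hh t (Suc d) (pCons a p) = smult a (monom 1 (t * Suc d)) + (monom 1 (t+1) + 1) * Hh t d p"
  unfolding Hh_def sum.atMost_Suc_shift
  by (simp add: sum_distrib_left mult_ac)

lemma H_shift:
  assumes "degree p \<le> d"
  shows "Hh t (d + a) p = monom 1 (t * a) * Hh t d p"
proof -
  have "Hh t (d + a) p = (\<Sum>i\<le>d. smult (coeff p i) ((monom 1 (t+1) + 1) ^ i * monom 1 (t * (d + a - i))))"
    unfolding Hh_def
    by (rule sum.mono_neutral_right) (use assms in \<open>auto simp: coeff_eq_0\<close>)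
  also have "\<dots> = (\<Sum>i\<le>d. monom 1 (t * a) * smult (coeff p i) ((monom 1 (t+1) + 1) ^ i * monom 1 (t * (d - i))))"
  proof (rule sum.cong[OF refl])
    fix i assume "i \<in> {..d}"
    then have "t * (d + a - i) = t * a + t * (d - i)" by (simp add: algebra_simps diff_mult_distrib2)
    then have e: "monom (1::int) (t * (d + a - i)) = monom 1 (t * a) * monom 1 (t * (d - i))"
      by (simp add: mult_monom)
    show "smult (coeff p i) ((monom 1 (t+1) + 1) ^ i * monom 1 (t * (d + a - i))) =
      monom 1 (t * a) * smult (coeff p i) ((monom 1 (t+1) + 1) ^ i * monom 1 (t * (d - i)))"
      unfolding e by (simp add: mult_ac)
  qed
  also have "\<dots> = monom 1 (t * a) * Hh t d p" unfolding Hh_def by (simp add: sum_distrib_left)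
  finally show ?thesis .
qed

lemma H_0: "Hh t 0 p = [:coeff p 0:]"
  unfolding Hh_def by (simp add: monom_0)

lemma H_mult:
  "degree p \<le> d1 \<Longrightarrow> degree r \<le> d2 \<Longrightarrow> Hh t (d1 + d2) (p * r) = Hh t d1 p * Hh t d2 r"
proof (induction d1 arbitrary: p)
  case 0
  then have p: "p = [:coeff p 0:]" by (metis degree_0_id le_zero_eq)
  have "p * r = smult (coeff p 0) r" by (subst p) simp
  then show ?case using H_0 by (simp add: H_smult)
next
  case (Suc d p)
  obtain a p' where p: "p = pCons a p'" by (cases p) auto
  have dp': "degree p' \<le> d" using Suc.prems(1) p by (cases "p' = 0") auto
  have "p * r = smult a r + pCons 0 (p' * r)" using p by simp
  then have "Hh t (Suc d + d2) (p * r) = smult a (Hh t (Suc d + d2) r) + Hh t (Suc (d + d2)) (pCons 0 (p' * r))"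
    by (simp add: H_add H_smult)
  also have "Hh t (Suc d + d2) r = monom 1 (t * Suc d) * Hh t d2 r"
    using H_shift[OF Suc.prems(2), of t "Suc d"] by (simp add: add.commute)
  also have "Hh t (Suc (d + d2)) (pCons 0 (p' * r)) = (monom 1 (t+1) + 1) * Hh t (d + d2) (p' * r)"
    by (simp add: H_pCons)
  also have "Hh t (d + d2) (p' * r) = Hh t d p' * Hh t d2 r" using Suc.IH[OF dp' Suc.prems(2)] .
  finally show ?case unfolding p H_pCons by (simp add: algebra_simps smult_monom flip: mult_smult_right)
qed

lemma Qcoeff:
  "coeff ((monom 1 (t+1) + 1 :: int poly) ^ i) (t * i) =
     (if (t + 1) dvd i then int (((t + 1) * (i div (t + 1))) choose (i div (t + 1))) else 0)"
proof -
  have "(monom 1 (t+1) + 1 :: int poly) ^ i = (\<Sum>j\<le>i. monom (of_nat (i choose j)) ((t+1) * j))"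
    unfolding binomial_ring by (simp add: monom_power of_nat_monom mult_monom mult.commute)
  then have "coeff ((monom 1 (t+1) + 1 :: int poly) ^ i) (t * i) =
      (\<Sum>j\<le>i. if (t + 1) * j = t * i then of_nat (i choose j) else 0)"
    by (simp add: coeff_sum)
  also have "\<dots> = (if (t + 1) dvd i then int (((t + 1) * (i div (t + 1))) choose (i div (t + 1))) else 0)"
  proof (cases "(t + 1) dvd i")
    case True
    then obtain q where i: "i = (t + 1) * q" by blast
    have "(\<Sum>j\<le>i. if (t + 1) * j = t * i then (of_nat (i choose j)::int) else 0)
        = (\<Sum>j\<le>i. if j = t * q then of_nat (i choose j) else 0)"
    proof (rule sum.cong[OF refl])
      fix j
      have ti: "t * i = (t + 1) * (t * q)" using i by (simp add: algebra_simps)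
      have "(t + 1) * j = t * i \<longleftrightarrow> (t + 1) * j = (t + 1) * (t * q)" by (simp only: ti)
      also have "\<dots> \<longleftrightarrow> j = t * q" by (rule mult_left_cancel) simp
      finally have "(t + 1) * j = t * i \<longleftrightarrow> j = t * q" .
      then show "(if (t + 1) * j = t * i then (of_nat (i choose j)::int) else 0)
        = (if j = t * q then of_nat (i choose j) else 0)" by simp
    qed
    also have "\<dots> = of_nat (i choose (t * q))" using i by simp
    also have "i choose (t * q) = i choose q"
    proof -
      have "t * q \<le> i" using i by simp
      then have "i choose (t * q) = i choose (i - t * q)" by (rule binomial_symmetric)
      also have "i - t * q = q" using i by simp
      finally show ?thesis .
    qed
    finally have r: "(\<Sum>j\<le>i. if (t + 1) * j = t * i then (of_nat (i choose j)::int) else 0) = of_nat (i choose q)" .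
    have iq: "i div (t + 1) = q" unfolding i by (rule nonzero_mult_div_cancel_left) simp
    have i2: "(t + 1) * q = i" using i by simp
    show ?thesis unfolding r using True by (simp only: iq i2 if_True)
  next
    case False
    have "(t + 1) * j \<noteq> t * i" for j
    proof
      assume "(t + 1) * j = t * i"
      then have "(t + 1) dvd t * i" by (metis dvd_triv_left)
      then have "(t + 1) dvd i" using coprime_dvd_mult_right_iff[of "t+1" t i] by simp
      with False show False ..
    qed
    then show ?thesis using False by simp
  qed
  finally show ?thesis .
qed

lemma LT_H:
  assumes "degree p \<le> d"
  shows "LT t p = coeff (Hh t d p) (t * d)"
proof -
  let ?B = "\<lambda>i. (if (t + 1) dvd i then int (((t + 1) * (i div (t + 1))) choose (i div (t + 1))) else 0)"
  have "LT t p = (\<Sum>i\<le>d. coeff p i * ?B i)"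
    unfolding LT_def
    by (rule sum.mono_neutral_left) (use assms in \<open>auto simp: coeff_eq_0\<close>)
  also have "\<dots> = coeff (Hh t d p) (t * d)"
    unfolding Hh_def coeff_sum
  proof (rule sum.cong[OF refl])
    fix i assume "i \<in> {..d}"
    then have id: "t * d = t * (d - i) + t * i" by (simp add: diff_mult_distrib2)
    have "coeff ((monom 1 (t+1) + 1) ^ i * monom 1 (t * (d - i))) (t * d)
        = coeff ((monom 1 (t+1) + 1 :: int poly) ^ i) (t * i)"
      by (subst mult.commute) (simp add: coeff_monom_mult id)
    then show "coeff p i * ?B i = coeff (smult (coeff p i) ((monom 1 (t+1) + 1) ^ i * monom 1 (t * (d - i)))) (t * d)"
      by (simp only: coeff_smult Qcoeff)
  qed
  finally show ?thesis .
qed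


lemma ar1: fixes t e j i :: nat
  assumes "i < t" "t*e + j \<le> t*t*j"
  shows "t*(e + (t+1)*i) + (j + 1 + i) \<le> t*t*(j+1+i)"
proof -
  have "(t+1)*(i+1) \<le> (t+1)*t" using assms(1) by (intro mult_le_mono2) simp
  then show ?thesis using assms(2) by (simp add: algebra_simps)
qed

lemma ar2: fixes t m :: nat
  assumes "1 \<le> m" "m \<le> t"
  shows "t*((t+1)*(m-1)) + m \<le> t*t*m"
proof -
  obtain n where m: "m = n + 1" using assms(1) by (metis add.commute le_Suc_ex)
  have "(t+1)*(n+1) \<le> (t+1)*t" using assms(2) m by (intro mult_le_mono2) simp
  then show ?thesis unfolding m by (simp add: algebra_simps)
qed

lemma ar3: fixes t e j i :: nat
  assumes "i + 1 < t" "t*e + j \<le> t*t*j" "t*(e + (t+1)*i) + (j+1+i) = t*t*(j+1+i)"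
  shows False
proof -
  have "(t+1)*(i+2) \<le> (t+1)*t" using assms(1) by (intro mult_le_mono2) simp
  then show ?thesis using assms(2,3) by (simp add: algebra_simps)
qed

lemma ar4: fixes t m n a s :: nat
  assumes "t*a + m \<le> t*t*m" "t*(s - a) + n \<le> t*t*n" "a \<le> s" "s = t*(m+n)" "0 < m+n"
  shows False
proof -
  have "t*a \<le> t*s" using assms(3) by (rule mult_le_mono2)
  moreover have "t*(s-a) = t*s - t*a" by (rule diff_mult_distrib2)
  ultimately have eq: "t*(s-a) + t*a = t*s" by simp
  have "t*(s-a) + t*a + m + n \<le> t*t*m + t*t*n" using assms(1,2) by linarith
  then have "t*s + m + n \<le> t*t*m + t*t*n" using eq by linarith
  moreover have "t*s = t*t*m + t*t*n" using assms(4) by (simp add: algebra_simps)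
  ultimately show False using assms(5) by linarith
qed

lemma ar5: fixes t m n :: nat
  assumes "1 \<le> t" "n*t < m" "t*(t*m - n) + m \<le> t*t*m" shows False
proof -
  have "n \<le> n*t" using assms(1) by simp
  moreover have "m \<le> t*m" using assms(1) by simp
  ultimately have nm: "n \<le> t*m" using assms(2) by linarith
  have "t*(t*m - n) = t*(t*m) - t*n" by (rule diff_mult_distrib2)
  moreover have "t*n \<le> t*(t*m)" using nm by (rule mult_le_mono2)
  ultimately have "t*(t*m - n) + t*n = t*t*m" by (simp add: mult.assoc)
  then show False using assms(2,3) by (simp add: algebra_simps)
qed


definition Vv :: "nat \<Rightarrow> nat \<Rightarrow> int poly" where "Vv t m = Hh t m (Tpoly t m)"
definition Pq :: "nat \<Rightarrow> nat \<Rightarrow> int poly" where "Pq t L = Hh t L (Ppoly t L)"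

lemma H_monom_d: "Hh t d (monom 1 d) = (monom 1 (t+1) + 1) ^ d"
proof -
  have "Hh t d (monom 1 d) = (\<Sum>i\<le>d. if i = d then (monom 1 (t+1) + 1) ^ i * monom 1 (t * (d - i)) else 0)"
    unfolding Hh_def by (intro sum.cong) auto
  also have "\<dots> = (monom 1 (t+1) + 1) ^ d" by (simp add: sum.delta')
  finally show ?thesis .
qed

lemma X_mult: "monom 1 1 * p = pCons 0 (p::int poly)"
  by (simp add: monom_Suc monom_0)

lemma Pq_small: "L \<le> t \<Longrightarrow> Pq t L = (monom 1 (t+1) + 1) ^ L"
  unfolding Pq_def by (simp add: Ppoly_small H_monom_d)

lemma V_small: "m \<le> t \<Longrightarrow> Vv t m = (monom 1 (t+1) + 1) ^ m"
  unfolding Vv_def by (simp add: Tpoly_small H_monom_d)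

lemma V_0: "Vv t 0 = 1"
  by (simp add: V_small)

lemma H_X: "Hh t (Suc d) (monom 1 1 * p) = (monom 1 (t+1) + 1) * Hh t d p"
  unfolding X_mult H_pCons by simp

lemma H_lower:
  assumes "t + 1 \<le> m" "degree p \<le> m - t - 1"
  shows "Hh t m p = monom 1 (t * (t+1)) * Hh t (m - t - 1) p"
proof -
  have "m = (m - t - 1) + (t + 1)" using assms by simp
  then have "Hh t m p = Hh t ((m - t - 1) + (t + 1)) p" by simp
  also have "\<dots> = monom 1 (t * (t+1)) * Hh t (m - t - 1) p" by (rule H_shift[OF assms(2)])
  finally show ?thesis .
qed

lemma Pq_rec:
  assumes "t + 1 \<le> L"
  shows "Pq t L = (monom 1 (t+1) + 1) * Pq t (L - 1) - monom 1 (t * (t+1)) * Pq t (L - t - 1)"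
proof -
  have L: "L = Suc (L - 1)" using assms by simp
  have "Hh t L (monom 1 1 * Ppoly t (L - 1)) = (monom 1 (t+1) + 1) * Pq t (L - 1)"
    unfolding Pq_def by (subst L) (simp only: H_X)
  moreover have "Hh t L (Ppoly t (L - t - 1)) = monom 1 (t * (t+1)) * Pq t (L - t - 1)"
    unfolding Pq_def using assms degree_Ppoly by (intro H_lower) auto
  ultimately show ?thesis unfolding Pq_def Ppoly_rec[OF assms] H_diff by simp
qed

lemma V_decomp:
  assumes "t + 1 \<le> m"
  shows "Vv t m = (monom 1 (t+1) + 1) * Pq t (m - 1) - of_nat (t+1) * (monom 1 (t * (t+1)) * Pq t (m - t - 1))"
proof -
  have L: "m = Suc (m - 1)" using assms by simp
  have "Hh t m (monom 1 1 * Ppoly t (m - 1)) = (monom 1 (t+1) + 1) * Pq t (m - 1)"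
    unfolding Pq_def by (subst L) (simp only: H_X)
  moreover have "Hh t m (Ppoly t (m - t - 1)) = monom 1 (t * (t+1)) * Pq t (m - t - 1)"
    unfolding Pq_def using assms degree_Ppoly by (intro H_lower) auto
  moreover have "of_nat (t + 1) * Ppoly t (m - t - 1) = smult (of_nat (t+1)) (Ppoly t (m - t - 1))"
    by (simp add: of_nat_poly)
  moreover have "of_nat (t + 1) * (monom 1 (t * (t+1)) * Pq t (m - t - 1)) = smult (of_nat (t+1)) (monom 1 (t * (t+1)) * Pq t (m - t - 1))"
    by (simp add: of_nat_poly)
  ultimately show ?thesis unfolding Vv_def Tpoly_decomp[OF assms] H_diff
    by (simp add: H_smult)
qed

lemma V_rec:
  assumes m1: "1 \<le> m"
  shows "Vv t m = (monom 1 (t+1) + 1) * Vv t (m - 1)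
     - (if t + 1 \<le> m then monom 1 (t * (t+1)) * Vv t (m - t - 1) else 0)
     - (if m = t + 1 then of_nat t * monom 1 (t * (t+1)) else 0)"
proof -
  define Q where "Q = (monom 1 (t+1) + 1 :: int poly)"
  define Z where "Z = (monom 1 (t * (t+1)) :: int poly)"
  consider "m \<le> t" | "m = t + 1" | "t + 2 \<le> m \<and> m \<le> 2 * t + 1" | "2 * t + 2 \<le> m" by linarith
  then have "Vv t m = Q * Vv t (m - 1) - (if t + 1 \<le> m then Z * Vv t (m - t - 1) else 0)
     - (if m = t + 1 then of_nat t * Z else 0)"
  proof cases
    case 1
    then have "Vv t m = Q ^ m" "Vv t (m - 1) = Q ^ (m - 1)" unfolding Q_def by (simp_all add: V_small)
    moreover have "Q ^ m = Q * Q ^ (m - 1)" using m1 by (metis Suc_diff_le diff_Suc_1 power_Suc)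
    ultimately show ?thesis using 1 by simp
  next
    case 2
    have "Vv t m = Q * Pq t t - of_nat (t+1) * (Z * Pq t 0)"
      using V_decomp[of t m] 2 unfolding Q_def Z_def by simp
    moreover have "Pq t t = Q ^ t" "Pq t 0 = 1" unfolding Q_def by (simp_all add: Pq_small)
    moreover have "Vv t (m - 1) = Q ^ t" using 2 unfolding Q_def by (simp add: V_small)
    moreover have "Vv t (m - t - 1) = 1" using 2 by (simp add: V_0)
    ultimately show ?thesis using 2 by (simp add: algebra_simps)
  next
    case 3
    have h1: "t + 1 \<le> m - 1" using 3 by linarith
    have a: "Vv t m = Q * Pq t (m - 1) - of_nat (t+1) * (Z * Pq t (m - t - 1))"
      using V_decomp[of t m] 3 unfolding Q_def Z_def by simp
    have b: "Vv t (m - 1) = Q * Pq t (m - 2) - of_nat (t+1) * (Z * Pq t (m - t - 2))"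
      using V_decomp[of t "m - 1", OF h1] 3 unfolding Q_def Z_def by (simp add: numeral_2_eq_2)
    have h3: "m - t - 1 \<le> t" "m - t - 2 \<le> t" using 3 by linarith+
    have c: "Vv t (m - t - 1) = Q ^ (m - t - 1)" unfolding Q_def by (rule V_small[OF h3(1)])
    have d: "Pq t (m - 1) = Q * Pq t (m - 2) - Z * Pq t (m - t - 2)"
      using Pq_rec[of t "m - 1", OF h1] 3 unfolding Q_def Z_def by (simp add: numeral_2_eq_2)
    have e: "Pq t (m - t - 1) = Q ^ (m - t - 1)" "Pq t (m - t - 2) = Q ^ (m - t - 2)"
      unfolding Q_def by (rule Pq_small[OF h3(1)], rule Pq_small[OF h3(2)])
    have f: "Q ^ (m - t - 1) = Q * Q ^ (m - t - 2)"
    proof -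
      have "m - t - 1 = Suc (m - t - 2)" using 3 by linarith
      then show ?thesis by simp
    qed
    show ?thesis using 3 unfolding a b c d e f by (simp add: algebra_simps)
  next
    case 4
    have h1: "t + 1 \<le> m - 1" using 4 by linarith
    have h2: "t + 1 \<le> m - t - 1" using 4 by linarith
    have a: "Vv t m = Q * Pq t (m - 1) - of_nat (t+1) * (Z * Pq t (m - t - 1))"
      using V_decomp[of t m] 4 unfolding Q_def Z_def by simp
    have b: "Vv t (m - 1) = Q * Pq t (m - 2) - of_nat (t+1) * (Z * Pq t (m - t - 2))"
      using V_decomp[of t "m - 1", OF h1] 4 unfolding Q_def Z_def by (simp add: numeral_2_eq_2)
    have c: "Vv t (m - t - 1) = Q * Pq t (m - t - 2) - of_nat (t+1) * (Z * Pq t (m - 2 * t - 2))"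
      using V_decomp[of t "m - t - 1", OF h2] 4 unfolding Q_def Z_def by (simp add: numeral_2_eq_2)
    have d: "Pq t (m - 1) = Q * Pq t (m - 2) - Z * Pq t (m - t - 2)"
      using Pq_rec[of t "m - 1", OF h1] 4 unfolding Q_def Z_def by (simp add: numeral_2_eq_2)
    have e: "Pq t (m - t - 1) = Q * Pq t (m - t - 2) - Z * Pq t (m - 2 * t - 2)"
      using Pq_rec[of t "m - t - 1", OF h2] 4 unfolding Q_def Z_def by (simp add: numeral_2_eq_2)
    show ?thesis using 4 unfolding a b c d e by (simp add: algebra_simps)
  qed
  then show ?thesis unfolding Q_def Z_def .
qed


definition Ww :: "nat \<Rightarrow> nat \<Rightarrow> int poly" where
  "Ww t m = Vv t m - monom 1 ((t+1) * m)"

lemma W_0: "Ww t 0 = 0"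
  unfolding Ww_def by (simp add: V_0)

definition Sg :: "nat \<Rightarrow> nat \<Rightarrow> int poly" where
  "Sg t m = (\<Sum>i<t. monom 1 ((t+1) * i) * Ww t (m - 1 - i))"

definition bs :: "nat \<Rightarrow> nat \<Rightarrow> int poly" where
  "bs t m = (if m \<le> t then monom (int m) ((t+1) * (m - 1)) else 0)"

lemma Sg_shift:
  assumes "2 \<le> m"
  shows "Sg t m + monom 1 ((t+1) * t) * Ww t (m - 1 - t) = Ww t (m - 1) + monom 1 (t+1) * Sg t (m - 1)"
proof -
  let ?g = "\<lambda>i. monom (1::int) ((t+1) * i) * Ww t (m - 1 - i)"
  have "sum ?g {..<Suc t} = Sg t m + ?g t" unfolding Sg_def by simp
  moreover have "sum ?g {..<Suc t} = ?g 0 + (\<Sum>i<t. ?g (Suc i))" by (rule sum.lessThan_Suc_shift)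
  moreover have "(\<Sum>i<t. ?g (Suc i)) = monom 1 (t+1) * Sg t (m - 1)"
    unfolding Sg_def sum_distrib_left
  proof (rule sum.cong[OF refl])
    fix i
    have "monom (1::int) ((t+1) * Suc i) = monom 1 (t+1) * monom 1 ((t+1) * i)"
      by (simp add: mult_monom)
    moreover have "m - 1 - Suc i = m - 1 - 1 - i" by simp
    ultimately show "?g (Suc i) = monom 1 (t+1) * (monom 1 ((t+1) * i) * Ww t (m - 1 - 1 - i))"
      by (simp add: mult.assoc)
  qed
  ultimately show ?thesis by simp
qed

lemma W_sum:
  assumes t1: "1 \<le> t"
  shows "1 \<le> m \<Longrightarrow> Ww t m = Sg t m + bs t m"
proof (induction m rule: less_induct)
  case (less m)
  define q where "q = (\<lambda>a. monom (1::int) ((t+1) * a))"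
  have V1: "Vv t m = (q 1 + 1) * Vv t (m - 1)
     - (if t + 1 \<le> m then q t * Vv t (m - t - 1) else 0)
     - (if m = t + 1 then of_nat t * q t else 0)"
    using V_rec[OF less.prems] unfolding q_def by (simp add: mult.commute)
  have Wd: "Ww t a = Vv t a - q a" for a unfolding Ww_def q_def ..
  show ?case
  proof (cases "m = 1")
    case True
    have "Vv t m = q 1 + 1" using V1 True t1 by (simp add: V_0)
    then have "Ww t m = 1" unfolding Wd using True by simp
    moreover have "Sg t m = 0" unfolding Sg_def using True by (simp add: W_0)
    moreover have "bs t m = 1" unfolding bs_def using True t1 by simp
    ultimately show ?thesis by simp
  next
    case False
    then have m2: "2 \<le> m" using less.prems by simp
    have IH: "Ww t (m - 1) = Sg t (m - 1) + bs t (m - 1)" using less.IH m2 by simp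
    have sh: "Sg t m = Ww t (m - 1) + q 1 * Sg t (m - 1) - q t * Ww t (m - 1 - t)"
      using Sg_shift[OF m2, of t] unfolding q_def by (simp add: algebra_simps)
    have qq: "q 1 * q (m - 1) = q m"
    proof -
      have "m = Suc (m - 1)" using m2 by simp
      then have "(t+1) * m = (t+1) + (t+1) * (m - 1)" by (metis mult_Suc_right)
      then have "(t+1) + (t+1) * (m - 1) = (t+1) * m" by simp
      then show ?thesis unfolding q_def by (simp add: mult_monom)
    qed
    consider "m \<le> t" | "m = t + 1" | "t + 2 \<le> m" by linarith
    then show ?thesis
    proof cases
      case 1
      have z: "Ww t (m - 1 - t) = 0" using 1 by (simp add: W_0)
      have b1: "q 1 * bs t (m - 1) = monom (int (m - 1)) ((t+1) * (m - 1))"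
      proof -
        have "m - 1 = Suc (m - 1 - 1)" using m2 by simp
        then have "(t+1) * (m - 1) = (t+1) + (t+1) * (m - 1 - 1)" by (metis mult_Suc_right)
        then have "(t+1) + (t+1) * (m - 1 - 1) = (t+1) * (m - 1)" by simp
        moreover have "m - 1 \<le> t" using 1 by simp
        ultimately show ?thesis unfolding q_def bs_def by (simp add: mult_monom)
      qed
      have b2: "bs t m = monom (int m) ((t+1) * (m - 1))" unfolding bs_def using 1 by simp
      have b3: "monom (int m) ((t+1) * (m - 1)) - monom (int (m - 1)) ((t+1) * (m - 1)) = q (m - 1)"
        unfolding q_def diff_monom using m2 by (simp add: of_nat_diff)
      have "Ww t m = (q 1 + 1) * (Ww t (m - 1) + q (m - 1)) - q m"
        unfolding Wd using V1 1 by simp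
      also have "\<dots> = Ww t (m - 1) + q 1 * Ww t (m - 1) + q (m - 1)"
        using qq by (simp add: algebra_simps)
      also have "\<dots> = Sg t m + bs t m"
        unfolding sh z IH b2 using b1 b3 by (simp add: algebra_simps)
      finally show ?thesis .
    next
      case 2
      have z: "Ww t (m - 1 - t) = 0" using 2 by (simp add: W_0)
      have b1: "q 1 * bs t (m - 1) = of_nat t * q t"
      proof -
        have "t = Suc (t - 1)" using t1 by simp
        then have "(t+1) * t = (t+1) + (t+1) * (t - 1)" by (metis mult_Suc_right)
        then have e: "(t+1) + (t+1) * (t - 1) = (t+1) * t" by simp
        have s1: "q 1 * bs t (m - 1) = monom (int t) ((t+1) + (t+1) * (t - 1))"
          unfolding q_def bs_def using 2 by (simp add: mult_monom)
        have s2: "monom (int t) ((t+1) + (t+1) * (t - 1)) = monom (int t) ((t+1) * t)"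
          using e by (rule arg_cong)
        have s3: "of_nat t * q t = monom (int t) ((t+1) * t)"
          unfolding q_def by (simp add: of_nat_monom mult_monom)
        show ?thesis using s1 s2 s3 by simp
      qed
      have b2: "bs t m = 0" unfolding bs_def using 2 by simp
      have "Ww t m = (q 1 + 1) * (Ww t (m - 1) + q (m - 1)) - q t * 1 - of_nat t * q t - q m"
        unfolding Wd using V1 2 by (simp add: V_0)
      also have "\<dots> = Ww t (m - 1) + q 1 * Ww t (m - 1) - of_nat t * q t"
        using qq 2 by (simp add: algebra_simps)
      also have "\<dots> = Sg t m + bs t m"
        unfolding sh z IH b2 using b1 by (simp add: algebra_simps)
      finally show ?thesis .
    next
      case 3
      have b1: "bs t (m - 1) = 0" "bs t m = 0" unfolding bs_def using 3 by simp_all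
      have qt: "q t * q (m - t - 1) = q (m - 1)"
      proof -
        have "t + (m - t - 1) = m - 1" using 3 by arith
        then have "(t+1) * (t + (m - t - 1)) = (t+1) * (m - 1)" by (rule arg_cong)
        then have "(t+1) * t + (t+1) * (m - t - 1) = (t+1) * (m - 1)" by (simp only: distrib_left)
        then show ?thesis unfolding q_def by (simp add: mult_monom)
      qed
      have mt: "m - t - 1 = m - 1 - t" by simp
      have "Ww t m = (q 1 + 1) * (Ww t (m - 1) + q (m - 1)) - q t * (Ww t (m - t - 1) + q (m - t - 1)) - q m"
        unfolding Wd using V1 3 by simp
      also have "\<dots> = Ww t (m - 1) + q 1 * Ww t (m - 1) - q t * Ww t (m - 1 - t)"
        using qq qt unfolding mt by (simp add: algebra_simps)
      also have "\<dots> = Sg t m + bs t m"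
        unfolding sh IH b1 by (simp add: algebra_simps)
      finally show ?thesis .
    qed
  qed
qed


lemma coeff_W_expand:
  assumes "1 \<le> t" "1 \<le> m"
  shows "coeff (Ww t m) d = (\<Sum>i<t. (if d < (t+1)*i then 0 else coeff (Ww t (m-1-i)) (d - (t+1)*i)))
     + (if m \<le> t \<and> d = (t+1)*(m-1) then int m else 0)"
  unfolding W_sum[OF assms] Sg_def bs_def coeff_add coeff_sum
proof (intro arg_cong2[where f="(+)"] sum.cong refl)
  fix i
  show "coeff (monom 1 ((t+1)*i) * Ww t (m-1-i)) d =
    (if d < (t+1)*i then 0 else coeff (Ww t (m-1-i)) (d - (t+1)*i))"
    by (simp only: coeff_monom_mult mult_1)
next
  show "coeff (if m \<le> t then monom (int m) ((t+1)*(m-1)) else 0) d =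
    (if m \<le> t \<and> d = (t+1)*(m-1) then int m else 0)" by auto
qed

lemma W1:
  assumes t1: "1 \<le> t"
  shows "coeff (Ww t m) d \<noteq> 0 \<Longrightarrow> t*d + m \<le> t*t*m"
proof (induction m arbitrary: d rule: less_induct)
  case (less m d)
  have m1: "1 \<le> m"
  proof (rule ccontr)
    assume "\<not> 1 \<le> m"
    then have "m = 0" by simp
    then show False using less.prems by (simp add: W_0)
  qed
  let ?T = "\<lambda>i. (if d < (t+1)*i then 0 else coeff (Ww t (m-1-i)) (d - (t+1)*i))"
  have "(\<Sum>i<t. ?T i) + (if m \<le> t \<and> d = (t+1)*(m-1) then int m else 0) \<noteq> 0"
    using less.prems unfolding coeff_W_expand[OF t1 m1] .
  then consider "(\<Sum>i<t. ?T i) \<noteq> 0" | "m \<le> t \<and> d = (t+1)*(m-1)"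
    by (cases "m \<le> t \<and> d = (t+1)*(m-1)") auto
  then show ?case
  proof cases
    case 1
    then obtain i where i0: "i \<in> {..<t}" "?T i \<noteq> 0"
      by (rule sum.not_neutral_contains_not_neutral)
    then have i: "i < t" "?T i \<noteq> 0" by auto
    then have di: "\<not> d < (t+1)*i" and c: "coeff (Ww t (m-1-i)) (d - (t+1)*i) \<noteq> 0"
      by (auto split: if_splits)
    have "m - 1 - i \<noteq> 0" using c by (auto simp: W_0)
    then have j: "m - 1 - i < m" "(m - 1 - i) + 1 + i = m" by auto
    have IH: "t * (d - (t+1)*i) + (m - 1 - i) \<le> t*t*(m - 1 - i)" using less.IH[OF j(1) c] .
    have r: "t * ((d - (t+1)*i) + (t+1)*i) + ((m - 1 - i) + 1 + i) \<le> t*t*((m - 1 - i) + 1 + i)"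
      by (rule ar1[OF i(1) IH])
    have e1: "(d - (t+1)*i) + (t+1)*i = d" using di by simp
    from r show ?thesis unfolding e1 j(2) .
  next
    case 2
    then show ?thesis using ar2[OF m1] by simp
  qed
qed

lemma W0c:
  assumes t1: "1 \<le> t"
  shows "1 \<le> n \<Longrightarrow> coeff (Ww t n) 0 = 1"
proof (induction n)
  case 0 then show ?case by simp
next
  case (Suc n)
  obtain s where s: "t = Suc s" using t1 by (cases t) auto
  let ?T = "\<lambda>i. (if (0::nat) < (t+1)*i then 0 else coeff (Ww t (Suc n-1-i)) (0 - (t+1)*i))"
  have "(\<Sum>i<t. ?T i) = ?T 0 + (\<Sum>i<s. ?T (Suc i))" unfolding s by (rule sum.lessThan_Suc_shift)
  also have "(\<Sum>i<s. ?T (Suc i)) = 0" by simp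
  finally have S: "(\<Sum>i<t. ?T i) = coeff (Ww t n) 0" by simp
  have "coeff (Ww t (Suc n)) 0 = (\<Sum>i<t. ?T i) + (if Suc n \<le> t \<and> 0 = (t+1)*(Suc n - 1) then int (Suc n) else 0)"
    using coeff_W_expand[OF t1, of "Suc n" 0] by simp
  also have "\<dots> = coeff (Ww t n) 0 + (if n = 0 then 1 else 0)" unfolding S using t1 by auto
  also have "\<dots> = 1"
  proof (cases "n = 0")
    case True then show ?thesis by (simp add: W_0)
  next
    case False then show ?thesis using Suc.IH by simp
  qed
  finally show ?case .
qed

lemma W2_step:
  assumes ts: "t = Suc s"
    and IH: "1 \<le> k \<Longrightarrow> coeff (Ww t (t * k)) ((s*s + 2*s) * k) = int t"
  shows "coeff (Ww t (t * Suc k)) ((s*s + 2*s) * Suc k) = int t"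
proof -
  have t1: "1 \<le> t" using ts by simp
  define m where "m = t * Suc k"
  define d where "d = (s*s + 2*s) * Suc k"
  have m1: "1 \<le> m" unfolding m_def ts by simp
  have tdm: "t*d + m = t*t*m" unfolding m_def d_def ts by (simp add: algebra_simps)
  let ?T = "\<lambda>i. (if d < (t+1)*i then 0 else coeff (Ww t (m-1-i)) (d - (t+1)*i))"
  have E: "coeff (Ww t m) d = (\<Sum>i<t. ?T i) + (if m \<le> t \<and> d = (t+1)*(m-1) then int m else 0)"
    by (rule coeff_W_expand[OF t1 m1])
  have Z: "?T i = 0" if i: "i < s" for i
  proof (rule ccontr)
    assume ne: "?T i \<noteq> 0"
    then have di: "\<not> d < (t+1)*i" and c: "coeff (Ww t (m-1-i)) (d - (t+1)*i) \<noteq> 0"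
      by (auto split: if_splits)
    have "m - 1 - i \<noteq> 0" using c by (auto simp: W_0)
    then have j: "(m - 1 - i) + 1 + i = m" by auto
    have B: "t * (d - (t+1)*i) + (m - 1 - i) \<le> t*t*(m - 1 - i)" using W1[OF t1 c] .
    have i1: "i + 1 < t" using i ts by simp
    have e1: "(d - (t+1)*i) + (t+1)*i = d" using di by simp
    have "t * ((d - (t+1)*i) + (t+1)*i) + ((m - 1 - i) + 1 + i) = t*t*((m - 1 - i) + 1 + i)"
      unfolding e1 j by (rule tdm)
    then show False by (rule ar3[OF i1 B])
  qed
  have L: "{..<t} = insert s {..<s}" using ts by auto
  have z0: "(\<Sum>i<s. ?T i) = 0" by (rule sum.neutral) (use Z in blast)
  have sum1: "(\<Sum>i<t. ?T i) = ?T s" unfolding L using z0 by simp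
  have a1: "\<not> d < (t+1)*s" unfolding d_def ts by (simp add: algebra_simps)
  have a2: "m - 1 - s = t * k" unfolding m_def ts by simp
  have a3: "d - (t+1)*s = (s*s + 2*s) * k" unfolding d_def ts by (simp add: algebra_simps)
  have Ts: "?T s = coeff (Ww t (t * k)) ((s*s + 2*s) * k)" using a1 a2 a3 by simp
  show ?thesis
  proof (cases "k = 0")
    case True
    have mt: "m = t" unfolding m_def True by simp
    have h1: "m \<le> t" using mt by simp
    have h2: "d = (t+1)*(m-1)" unfolding mt d_def True ts by (simp add: algebra_simps)
    have B: "(if m \<le> t \<and> d = (t+1)*(m-1) then int m else 0) = int t"
      using h1 h2 mt by (simp only: if_True conj_absorb simp_thms)
    have "coeff (Ww t (t * k)) ((s*s + 2*s) * k) = 0" using True by (simp add: W_0)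
    with Ts have T0: "?T s = 0" by (rule trans)
    have "coeff (Ww t m) d = int t" unfolding E sum1 T0 B by simp
    then show ?thesis unfolding m_def d_def .
  next
    case False
    have "\<not> m \<le> t" unfolding m_def ts using False by simp
    then have B: "(if m \<le> t \<and> d = (t+1)*(m-1) then int m else 0) = 0" by simp
    have "coeff (Ww t m) d = ?T s" unfolding E sum1 B by simp
    also have "\<dots> = int t" using Ts IH[of] False by simp
    finally show ?thesis unfolding m_def d_def .
  qed
qed

lemma W2:
  assumes ts: "t = Suc s"
  shows "coeff (Ww t (t * Suc k)) ((s*s + 2*s) * Suc k) = int t"
proof (induction k)
  case 0 then show ?case using W2_step[OF ts, of 0] by simp
next
  case (Suc k) then show ?case using W2_step[OF ts, of "Suc k"] by simp
qed


lemma LT_prod: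
  "LT t (Tpoly t m * Tpoly t n) =
     coeff ((monom 1 ((t+1)*m) + Ww t m) * (monom 1 ((t+1)*n) + Ww t n)) (t*(m+n))"
proof -
  have dg: "degree (Tpoly t m * Tpoly t n) \<le> m + n"
    using degree_mult_le[of "Tpoly t m" "Tpoly t n"] degree_Tpoly[of t m] degree_Tpoly[of t n] by linarith
  have "LT t (Tpoly t m * Tpoly t n) = coeff (Hh t (m+n) (Tpoly t m * Tpoly t n)) (t*(m+n))"
    by (rule LT_H[OF dg])
  also have "Hh t (m+n) (Tpoly t m * Tpoly t n) = Vv t m * Vv t n"
    unfolding Vv_def by (rule H_mult[OF degree_Tpoly degree_Tpoly])
  also have "Vv t m = monom 1 ((t+1)*m) + Ww t m" unfolding Ww_def by simp
  also have "Vv t n = monom 1 ((t+1)*n) + Ww t n" unfolding Ww_def by simp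
  finally show ?thesis .
qed

lemma cBD:
  assumes t1: "1 \<le> t" and mn: "0 < m + n"
  shows "coeff (Ww t m * Ww t n) (t*(m+n)) = 0"
  unfolding coeff_mult
proof (rule sum.neutral, rule ballI)
  fix a assume a: "a \<in> {..t*(m+n)}"
  show "coeff (Ww t m) a * coeff (Ww t n) (t*(m+n) - a) = 0"
  proof (rule ccontr)
    assume "coeff (Ww t m) a * coeff (Ww t n) (t*(m+n) - a) \<noteq> 0"
    then have c1: "coeff (Ww t m) a \<noteq> 0" and c2: "coeff (Ww t n) (t*(m+n) - a) \<noteq> 0" by auto
    have "t*a + m \<le> t*t*m" by (rule W1[OF t1 c1])
    moreover have "t*(t*(m+n) - a) + n \<le> t*t*n" by (rule W1[OF t1 c2])
    ultimately show False using ar4[of t a m "t*(m+n)" n] a mn by auto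
  qed
qed

lemma expand4:
  "coeff ((A + B) * (C + D)) s = coeff (A * C) s + coeff (A * D) s + coeff (B * C) s + coeff (B * D) (s::nat)"
  for A B C D :: "int poly"
  by (simp add: algebra_simps)

lemma cAC:
  assumes "0 < m + n"
  shows "coeff (monom (1::int) ((t+1)*m) * monom 1 ((t+1)*n)) (t*(m+n)) = 0"
proof -
  have "(t+1)*m + (t+1)*n \<noteq> t*(m+n)" using assms by (simp add: algebra_simps)
  then show ?thesis by (simp add: mult_monom)
qed

lemma cM:
  "coeff (monom (1::int) a * p) s = (if s < a then 0 else coeff p (s - a))"
  by (simp add: coeff_monom_mult)

lemma cM':
  "coeff (p * monom (1::int) a) s = (if s < a then 0 else coeff p (s - a))"
  by (subst mult.commute) (rule cM)

theorem mainTheorem8: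
  fixes t :: nat
  assumes "t \<ge> 1"
  shows "(\<forall>n m. m > n * t \<longrightarrow> LT t (Tpoly t m * Tpoly t n) = 0) \<and>
         (\<forall>n. n \<ge> 1 \<longrightarrow> LT t (Tpoly t (n * t) * Tpoly t n) = int t + 1)"
proof (intro conjI allI impI)
  fix n m :: nat assume mn: "m > n * t"
  have t1: "1 \<le> t" using assms .
  have pos: "0 < m + n" using mn by simp
  have e1: "t*(m+n) < (t+1)*m" using mn by (simp add: algebra_simps)
  have nm: "n \<le> t*m"
  proof -
    have "n \<le> n*t" using t1 by simp
    moreover have "m \<le> t*m" using t1 by simp
    ultimately show ?thesis using mn by linarith
  qed
  have e2: "\<not> t*(m+n) < (t+1)*n" using nm by (simp add: algebra_simps)
  have e3: "t*(m+n) - (t+1)*n = t*m - n" by (simp add: algebra_simps)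
  have z: "coeff (Ww t m) (t*m - n) = 0"
  proof (rule ccontr)
    assume "coeff (Ww t m) (t*m - n) \<noteq> 0"
    then have "t*(t*m - n) + m \<le> t*t*m" by (rule W1[OF t1])
    then show False using ar5[OF t1 mn] by simp
  qed
  show "LT t (Tpoly t m * Tpoly t n) = 0"
    unfolding LT_prod expand4 cAC[OF pos] cBD[OF t1 pos] cM cM'
    using e1 e2 e3 z by simp
next
  fix n :: nat assume n1: "n \<ge> 1"
  have t1: "1 \<le> t" using assms .
  obtain s where ts: "t = Suc s" using t1 by (cases t) auto
  obtain k where nk: "n = Suc k" using n1 by (cases n) auto
  define m where "m = n * t"
  have pos: "0 < m + n" using n1 by simp
  have e1: "\<not> t*(m+n) < (t+1)*m" unfolding m_def by (simp add: algebra_simps)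
  have e1': "t*(m+n) - (t+1)*m = 0" unfolding m_def by (simp add: algebra_simps)
  have e2: "\<not> t*(m+n) < (t+1)*n" unfolding m_def ts by (simp add: algebra_simps)
  have e3: "t*(m+n) - (t+1)*n = (s*s + 2*s) * Suc k" unfolding m_def ts nk by (simp add: algebra_simps)
  have mW: "m = t * Suc k" unfolding m_def nk by simp
  have w2: "coeff (Ww t m) ((s*s + 2*s) * Suc k) = int t" unfolding mW by (rule W2[OF ts])
  have w0: "coeff (Ww t n) 0 = 1" by (rule W0c[OF t1 n1])
  have tAD: "coeff (monom 1 ((t+1)*m) * Ww t n) (t*(m+n)) = 1"
    by (simp only: cM e1 e1' if_False w0)
  have tBC: "coeff (Ww t m * monom 1 ((t+1)*n)) (t*(m+n)) = int t"
    by (simp only: cM' e2 if_False e3 w2)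
  have "LT t (Tpoly t m * Tpoly t n) = 1 + int t"
    unfolding LT_prod expand4 cAC[OF pos] cBD[OF t1 pos] tAD tBC by simp
  then show "LT t (Tpoly t (n * t) * Tpoly t n) = int t + 1" unfolding m_def by simp
qed


end
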